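(* Let $b_1,\dots,b_n$ be positive integers, $b^*=\max\{b_1,\dots,b_n\}$, and let $(h_0([\mathbf b]),\dots,h_{r}([\mathbf b]))$ be the $h$-vector of $R_{[\mathbf b]}$, with $r=r_{[\mathbf b]}$ chosen so that $h_r([\mathbf b])\ne0$. Then (1) $r_{[\mathbf b]}=(b_1+\dots+b_n)-b^*$; (2) $h_{r_{[\mathbf b]}}([\mathbf b])=\binom{b^*}{b_1}\binom{b^*}{b_2}\cdots\binom{b^*}{b_n}$. In particular $h_{r_{[\mathbf b]}}([\mathbf b])=1$ if and only if $b_1=b_2=\dots=b_n$, in which case $r_{[\mathbf b]}=(n-1)b_1$; equivalently, $R_{[\mathbf b]}$ is Gorenstein if and only if $b_1=\dots=b_n$.
   Context: Let $K$ be a field, $[\mathbf b]=[b_1,\dots,b_n]$, $\mathcal M=\{0,\dots,b_1\}\times\dots\times\{0,\dots,b_n\}$, $S=K[T_v\mid v\in\mathcal M]$ standard graded, $\mathcal J_{[\mathbf b]}=\ker(T_v\mapsto x_{1,v_1}\cdots x_{n,v_n})$, and $R_{[\mathbf b]}=S/\mathcal J_{[\mathbf b]}$, a domain of Krull dimension $d=b_1+\dots+b_n+1$. The $h$-vector is defined by writing the Hilbert–Poincaré series $\sum_{l\ge0}\dim_K(R_{[\mathbf b]})_lt^l=\frac{\sum_k h_k([\mathbf b])t^k}{(1-t)^{d}}$. *)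

theory Defs
  imports "HOL-Computational_Algebra.Formal_Power_Series"
begin

text \<open>The variable x_{i,j} (0-based i < n, 0 \<le> j \<le> b_i) is indexed by the pair (i,j);
  a monomial in the x's is its exponent vector of type nat \<times> nat \<Rightarrow> nat.\<close>

definition lattice_pts :: "nat list \<Rightarrow> nat list set" where
  "lattice_pts b = {v. length v = length b \<and> (\<forall>i<length b. v ! i \<le> b ! i)}"

text \<open>Exponent vector of the image x_{1,v_1} ... x_{n,v_n} of T_v.\<close>
definition gen_exp :: "nat list \<Rightarrow> (nat \<times> nat \<Rightarrow> nat)" where
  "gen_exp v = (\<lambda>(i, j). if i < length v \<and> j = v ! i then 1 else 0)"

text \<open>R_[b] is (isomorphic to) the image of S in K[x_{i,j}], a monomial algebra.
  Its degree-l component is spanned by the (linearly independent) monomials that are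
  products of l generator images; so dim_K (R_[b])_l is the number of these monomials.\<close>
definition deg_monos :: "nat list \<Rightarrow> nat \<Rightarrow> (nat \<times> nat \<Rightarrow> nat) set" where
  "deg_monos b l = {(\<lambda>p. \<Sum>k<l. gen_exp (vs k) p) | vs. \<forall>k<l. vs k \<in> lattice_pts b}"

definition hilbert_fun :: "nat list \<Rightarrow> nat \<Rightarrow> nat" where
  "hilbert_fun b l = card (deg_monos b l)"

definition krull_dim :: "nat list \<Rightarrow> nat" where
  "krull_dim b = sum_list b + 1"

definition h_vec :: "nat list \<Rightarrow> nat \<Rightarrow> int" where
  "h_vec b k = fps_nth (Abs_fps (\<lambda>l. of_nat (hilbert_fun b l)) * (1 - fps_X) ^ krull_dim b) k"

end

theory Submission
  imports Defs
begin

unbundle fps_syntax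

definition Dop :: "(int \<Rightarrow> 'a::ab_group_add) \<Rightarrow> int \<Rightarrow> 'a" where
  "Dop f = (\<lambda>x. f x - f (x - 1))"

lemma Dop_apply: "Dop f x = f x - f (x - 1)"
  by (simp add: Dop_def)

lemma Dpow_Suc': "(Dop ^^ Suc n) f = (Dop ^^ n) (Dop f)"
  by (simp only: funpow_Suc_right o_apply)

lemma Dpow_add: "(Dop ^^ n) (\<lambda>x. f x + g x) = (\<lambda>x. (Dop ^^ n) f x + (Dop ^^ n) g x)"
  by (induction n) (auto simp: Dop_def algebra_simps)

lemma Dpow_diff: "(Dop ^^ n) (\<lambda>x. f x - g x) = (\<lambda>x. (Dop ^^ n) f x - (Dop ^^ n) g x)"
  by (induction n) (auto simp: Dop_def algebra_simps)

lemma Dpow_zero: "(Dop ^^ n) (\<lambda>x. 0) = (\<lambda>x. 0)"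
  by (induction n) (auto simp: Dop_def)

lemma Dpow_shift: "(Dop ^^ n) (\<lambda>x. f (x - 1)) = (\<lambda>x. (Dop ^^ n) f (x - 1))"
  by (induction n) (auto simp: Dop_def)

lemma Dpow_of_int: "(Dop ^^ n) (\<lambda>x. of_int (f x)) = (\<lambda>x. of_int ((Dop ^^ n) f x))"
  by (induction n) (auto simp: Dop_def)

lemma Dop_prod:
  fixes f g :: "int \<Rightarrow> 'a::comm_ring"
  shows "Dop (\<lambda>x. f x * g x) = (\<lambda>x. Dop f x * g x + f (x - 1) * Dop g x)"
  by (auto simp: Dop_def algebra_simps)

lemma prod_kill:
  fixes f g :: "int \<Rightarrow> 'a::comm_ring"
  shows "1 \<le> m \<Longrightarrow> 1 \<le> n \<Longrightarrow> (Dop ^^ m) f = (\<lambda>x. 0) \<Longrightarrow> (Dop ^^ n) g = (\<lambda>x. 0)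
    \<Longrightarrow> (Dop ^^ (m + n - 1)) (\<lambda>x. f x * g x) = (\<lambda>x. 0)"
proof (induction "m + n" arbitrary: m n f g rule: less_induct)
  case less
  obtain k where k: "m + n - 1 = Suc k" using less.prems by (cases "m+n-1") auto
  have "(Dop ^^ (m + n - 1)) (\<lambda>x. f x * g x)
      = (Dop ^^ k) (\<lambda>x. Dop f x * g x + f (x - 1) * Dop g x)"
    by (simp only: k Dpow_Suc' Dop_prod)
  also have "\<dots> = (\<lambda>x. (Dop ^^ k) (\<lambda>x. Dop f x * g x) x + (Dop ^^ k) (\<lambda>x. f (x - 1) * Dop g x) x)"
    by (rule Dpow_add)
  also have "(Dop ^^ k) (\<lambda>x. Dop f x * g x) = (\<lambda>x. 0)"
  proof (cases "m = 1")
    case True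
    then have "Dop f = (\<lambda>x. 0)" using less.prems(3) by simp
    then show ?thesis by (simp add: Dpow_zero)
  next
    case False
    have m: "m = Suc (m - 1)" using less.prems(1) by simp
    have "(Dop ^^ (m - 1)) (Dop f) = (\<lambda>x. 0)" using less.prems(3) m
      by (metis Dpow_Suc')
    moreover have "k = (m - 1) + n - 1" using k False less.prems by arith
    ultimately show ?thesis using less.hyps[of "m - 1" n "Dop f" g] False less.prems by simp
  qed
  also have "(Dop ^^ k) (\<lambda>x. f (x - 1) * Dop g x) = (\<lambda>x. 0)"
  proof (cases "n = 1")
    case True
    then have "Dop g = (\<lambda>x. 0)" using less.prems(4) by simp
    then show ?thesis by (simp add: Dpow_zero)
  next
    case False
    have n: "n = Suc (n - 1)" using less.prems(2) by simp
    have "(Dop ^^ (n - 1)) (Dop g) = (\<lambda>x. 0)" using less.prems(4) n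
      by (metis Dpow_Suc')
    moreover have "(Dop ^^ m) (\<lambda>x. f (x - 1)) = (\<lambda>x. 0)" using less.prems(3) by (simp add: Dpow_shift)
    moreover have "k = m + (n - 1) - 1" using k False less.prems by arith
    ultimately show ?thesis using less.hyps[of m "n - 1" "\<lambda>x. f (x - 1)" "Dop g"] False less.prems by simp
  qed
  finally show ?case by simp
qed

definition Q :: "nat \<Rightarrow> int \<Rightarrow> rat" where
  "Q c x = (of_int x + of_nat c) gchoose c"

lemma Dop_Q: "Dop (Q (Suc c)) = Q c"
proof
  fix x
  have "Q (Suc c) x = (of_int x + of_nat c + 1) gchoose Suc c" by (simp add: Q_def add_ac)
  moreover have "Q (Suc c) (x - 1) = (of_int x + of_nat c) gchoose Suc c" by (simp add: Q_def)
  ultimately show "Dop (Q (Suc c)) x = Q c x"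
    by (simp add: Dop_def gbinomial_Suc_Suc Q_def)
qed

lemma Q_kill: "(Dop ^^ Suc c) (Q c) = (\<lambda>x. 0)"
proof (induction c)
  case 0
  then show ?case by (simp add: Q_def Dop_def)
next
  case (Suc c)
  then show ?case by (metis Dpow_Suc' Dop_Q)
qed

definition P :: "nat list \<Rightarrow> int \<Rightarrow> rat" where
  "P b x = (\<Prod>c\<leftarrow>b. Q c x)"

lemma P_kill: "(Dop ^^ (sum_list b + 1)) (P b) = (\<lambda>x. 0)"
proof (induction b)
  case Nil
  then show ?case by (simp add: P_def Dop_def)
next
  case (Cons c b)
  have "P (c # b) = (\<lambda>x. Q c x * P b x)" by (simp add: P_def fun_eq_iff)
  moreover have "sum_list (c # b) + 1 = Suc c + (sum_list b + 1) - 1" by simp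
  ultimately show ?case using prod_kill[OF _ _ Q_kill Cons.IH] by simp
qed

lemma window:
  fixes f :: "int \<Rightarrow> 'a::comm_ring_1"
  assumes "\<forall>x>y. f x = 0"
  shows "(Dop ^^ d) f (y + int d) = (-1)^d * f y \<and> (\<forall>x > y + int d. (Dop ^^ d) f x = 0)"
  using assms
proof (induction d arbitrary: f y)
  case 0
  then show ?case by simp
next
  case (Suc d)
  have h1: "\<forall>x > y + 1. Dop f x = 0" using Suc.prems by (simp add: Dop_def)
  have h2: "Dop f (y + 1) = - f y" using Suc.prems by (simp add: Dop_def)
  from Suc.IH[OF h1] h2 show ?case
    unfolding Dpow_Suc' by (simp add: add_ac)
qed

lemma fps_coeff:
  fixes A :: "'a::comm_ring_1 fps"
  shows "(A * (1 - fps_X)^d) $ k = (Dop ^^ d) (\<lambda>x. if x \<ge> 0 then A $ nat x else 0) (int k)"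
proof -
  define a where "a = (\<lambda>x::int. if x \<ge> 0 then A $ nat x else 0)"
  have neg: "(Dop ^^ d) a x = 0" if "x < 0" for x d
    using that by (induction d arbitrary: x) (auto simp: a_def Dop_def)
  have "(A * (1 - fps_X)^d) $ k = (Dop ^^ d) a (int k)" for k
  proof (induction d arbitrary: k)
    case 0
    then show ?case by (simp add: a_def)
  next
    case (Suc d)
    have "A * (1 - fps_X)^Suc d = A * (1 - fps_X)^d - fps_X * (A * (1 - fps_X)^d)"
      by (simp add: algebra_simps)
    then have "(A * (1 - fps_X)^Suc d) $ k = (A * (1 - fps_X)^d) $ k
       - (if k = 0 then 0 else (A * (1 - fps_X)^d) $ (k - 1))" by simp
    also have "\<dots> = (Dop ^^ d) a (int k) - (Dop ^^ d) a (int k - 1)"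
    proof (cases "k = 0")
      case True
      then show ?thesis using Suc.IH[of 0] neg[of "-1" d] by simp
    next
      case False
      then have "int k - 1 = int (k - 1)" by simp
      then show ?thesis using Suc.IH[of k] Suc.IH[of "k - 1"] False by simp
    qed
    moreover have "(Dop ^^ Suc d) a (int k) = (Dop ^^ d) a (int k) - (Dop ^^ d) a (int k - 1)"
      by (subst funpow.simps(2), subst o_apply, rule Dop_apply)
    ultimately show ?case by simp
  qed
  then show ?thesis by (simp add: a_def)
qed

definition Sset :: "nat list \<Rightarrow> nat \<Rightarrow> (nat \<times> nat \<Rightarrow> nat) set" where
  "Sset b l = {e. (\<forall>i j. e (i, j) \<noteq> 0 \<longrightarrow> i < length b \<and> j \<le> b ! i)
                \<and> (\<forall>i<length b. (\<Sum>j\<le>b ! i. e (i, j)) = l)}"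

lemma deg_sub: "deg_monos b l \<subseteq> Sset b l"
proof
  fix e assume "e \<in> deg_monos b l"
  then obtain vs where e: "e = (\<lambda>p. \<Sum>k<l. gen_exp (vs k) p)"
    and vs: "\<forall>k<l. vs k \<in> lattice_pts b" unfolding deg_monos_def by blast
  have len: "length (vs k) = length b" "\<forall>i<length b. vs k ! i \<le> b ! i" if "k < l" for k
    using vs that by (auto simp: lattice_pts_def)
  have supp: "i < length b \<and> j \<le> b ! i" if "e (i, j) \<noteq> 0" for i j
  proof -
    from that obtain k where "k < l" "gen_exp (vs k) (i, j) \<noteq> 0"
      unfolding e using sum.neutral[of "{..<l}"] by auto
    then show ?thesis using len[of k] by (auto simp: gen_exp_def split: if_splits)
  qed
  have rows: "(\<Sum>j\<le>b ! i. e (i, j)) = l" if "i < length b" for i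
  proof -
    have "(\<Sum>j\<le>b ! i. e (i, j)) = (\<Sum>k<l. \<Sum>j\<le>b ! i. gen_exp (vs k) (i, j))"
      unfolding e by (rule sum.swap)
    also have "\<dots> = (\<Sum>k<l. 1)"
    proof (rule sum.cong)
      fix k assume "k \<in> {..<l}"
      then have "i < length (vs k)" "vs k ! i \<le> b ! i" using len[of k] that by auto
      then show "(\<Sum>j\<le>b ! i. gen_exp (vs k) (i, j)) = 1"
        by (simp add: gen_exp_def)
    qed simp
    finally show ?thesis by simp
  qed
  show "e \<in> Sset b l" using supp rows by (auto simp: Sset_def)
qed

lemma SsetD:
  assumes "e \<in> Sset b l"
  shows "\<And>i j. e (i, j) \<noteq> 0 \<Longrightarrow> i < length b \<and> j \<le> b ! i"
    and "\<And>i. i < length b \<Longrightarrow> (\<Sum>j\<le>b ! i. e (i, j)) = l"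
  using assms unfolding Sset_def mem_Collect_eq by blast+

lemma SsetI:
  assumes "\<And>i j. e (i, j) \<noteq> 0 \<Longrightarrow> i < length b \<and> j \<le> b ! i"
    and "\<And>i. i < length b \<Longrightarrow> (\<Sum>j\<le>b ! i. e (i, j)) = l"
  shows "e \<in> Sset b l"
  using assms unfolding Sset_def mem_Collect_eq by blast

lemma sup_deg: "e \<in> Sset b l \<Longrightarrow> e \<in> deg_monos b l"
proof (induction l arbitrary: e)
  case 0
  have "e = (\<lambda>p. 0)"
  proof
    fix p :: "nat \<times> nat"
    obtain i j where p: "p = (i, j)" by force
    show "e p = 0"
    proof (rule ccontr)
      assume ne: "e p \<noteq> 0"
      then have ij: "i < length b" "j \<le> b ! i" using SsetD(1)[OF 0, of i j] p by auto
      then have "(\<Sum>j\<le>b ! i. e (i, j)) = 0" using SsetD(2)[OF 0] by blast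
      then have "e (i, j) = 0" using ij(2) by simp
      then show False using ne p by simp
    qed
  qed
  then show ?case unfolding deg_monos_def by auto
next
  case (Suc l)
  have ex: "\<exists>j\<le>b ! i. 0 < e (i, j)" if "i < length b" for i
  proof (rule ccontr)
    assume "\<not> ?thesis"
    then have "(\<Sum>j\<le>b ! i. e (i, j)) = 0" by simp
    then show False using SsetD(2)[OF Suc.prems that] by simp
  qed
  then obtain J where J: "\<And>i. i < length b \<Longrightarrow> J i \<le> b ! i \<and> 0 < e (i, J i)" by metis
  define v where "v = map J [0..<length b]"
  have v: "v \<in> lattice_pts b" using J by (auto simp: v_def lattice_pts_def)
  have ge: "gen_exp v p \<le> e p" for p
    using J by (cases p) (auto simp: gen_exp_def v_def Suc_le_eq)
  define e' where "e' = (\<lambda>p. e p - gen_exp v p)"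
  have "e' \<in> Sset b l"
  proof (rule SsetI)
    fix i j assume "e' (i, j) \<noteq> 0"
    then have "e (i, j) \<noteq> 0" by (simp add: e'_def)
    then show "i < length b \<and> j \<le> b ! i" by (rule SsetD(1)[OF Suc.prems])
  next
    fix i assume i: "i < length b"
    have "(\<Sum>j\<le>b ! i. e' (i, j)) = (\<Sum>j\<le>b ! i. e (i, j)) - (\<Sum>j\<le>b ! i. gen_exp v (i, j))"
      unfolding e'_def using ge by (rule sum_subtractf_nat)
    moreover have "(\<Sum>j\<le>b ! i. gen_exp v (i, j)) = 1"
      using J[OF i] i by (simp add: gen_exp_def v_def)
    ultimately show "(\<Sum>j\<le>b ! i. e' (i, j)) = l" using SsetD(2)[OF Suc.prems i] by simp
  qed
  then have "e' \<in> deg_monos b l" by (rule Suc.IH)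
  then obtain vs where e': "e' = (\<lambda>p. \<Sum>k<l. gen_exp (vs k) p)"
    and vs: "\<forall>k<l. vs k \<in> lattice_pts b" unfolding deg_monos_def by blast
  define vs' where "vs' = vs(l := v)"
  have "e = (\<lambda>p. \<Sum>k<Suc l. gen_exp (vs' k) p)"
  proof
    fix p
    have "(\<Sum>k<Suc l. gen_exp (vs' k) p) = (\<Sum>k<l. gen_exp (vs k) p) + gen_exp v p"
      by (simp add: vs'_def)
    also have "(\<Sum>k<l. gen_exp (vs k) p) = e' p" using e' by simp
    also have "e' p + gen_exp v p = e p" using ge[of p] by (simp add: e'_def)
    finally show "e p = (\<Sum>k<Suc l. gen_exp (vs' k) p)" by simp
  qed
  moreover have "\<forall>k<Suc l. vs' k \<in> lattice_pts b" using vs v by (auto simp: vs'_def less_Suc_eq)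
  ultimately show ?case unfolding deg_monos_def by blast
qed

lemma deg_eq: "deg_monos b l = Sset b l"
  using deg_sub sup_deg by blast

definition wcomp :: "nat \<Rightarrow> nat \<Rightarrow> (nat \<Rightarrow> nat) set" where
  "wcomp c l = {f. (\<forall>j. f j \<noteq> 0 \<longrightarrow> j \<le> c) \<and> (\<Sum>j\<le>c. f j) = l}"

lemma sum_atMost_list: "(\<Sum>j\<le>c. f j) = sum_list (map f [0..<Suc c])"
  by (induction c) (simp_all add: add_ac)

lemma card_wcomp: "card (wcomp c l) = (l + c) choose c"
proof -
  let ?L = "{xs::nat list. length xs = Suc c \<and> sum_list xs = l}"
  have "bij_betw (\<lambda>f. map f [0..<Suc c]) (wcomp c l) ?L"
  proof (rule bij_betw_byWitness[where f' = "\<lambda>xs j. if j \<le> c then xs ! j else 0"])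
    show "\<forall>a\<in>wcomp c l. (\<lambda>j. if j \<le> c then map a [0..<Suc c] ! j else 0) = a"
      by (auto simp: wcomp_def fun_eq_iff less_Suc_eq_le nth_append)
    show "\<forall>a'\<in>?L. map (\<lambda>j. if j \<le> c then a' ! j else 0) [0..<Suc c] = a'"
      by (auto intro!: nth_equalityI simp del: upt_Suc simp: less_Suc_eq_le)
    show "(\<lambda>f. map f [0..<Suc c]) ` wcomp c l \<subseteq> ?L"
      by (auto simp: wcomp_def sum_atMost_list)
    show "(\<lambda>xs j. if j \<le> c then xs ! j else 0) ` ?L \<subseteq> wcomp c l"
    proof
      fix f assume "f \<in> (\<lambda>xs j. if j \<le> c then xs ! j else 0) ` ?L"
      then obtain xs where xs: "length xs = Suc c" "sum_list xs = l"
        and f: "f = (\<lambda>j. if j \<le> c then xs ! j else 0)" by auto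
      have "(\<Sum>j\<le>c. f j) = (\<Sum>j\<le>c. xs ! j)" by (simp add: f)
      also have "\<dots> = sum_list xs" using xs(1)
        by (simp add: sum_list_sum_nth lessThan_Suc_atMost atLeast0LessThan)
      finally show "f \<in> wcomp c l" using xs by (auto simp: wcomp_def f)
    qed
  qed
  then have "card (wcomp c l) = card ?L" by (rule bij_betw_same_card)
  also have "\<dots> = (l + c) choose l" using card_length_sum_list[of "Suc c" l] by simp
  also have "\<dots> = (l + c) choose c" using binomial_symmetric[of l "l + c"] by simp
  finally show ?thesis .
qed

lemma Sset_Nil: "Sset [] l = {\<lambda>p. 0}"
  by (auto simp: Sset_def fun_eq_iff)

lemma Sset_Cons: "card (Sset (c # b) l) = card (wcomp c l) * card (Sset b l)"
proof -
  let ?phi = "\<lambda>e::nat \<times> nat \<Rightarrow> nat. (\<lambda>j. e (0, j), \<lambda>p. e (Suc (fst p), snd p))"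
  let ?psi = "\<lambda>(f::nat \<Rightarrow> nat, e'::nat \<times> nat \<Rightarrow> nat). (\<lambda>p. if fst p = 0 then f (snd p) else e' (fst p - 1, snd p))"
  have "bij_betw ?phi (Sset (c # b) l) (wcomp c l \<times> Sset b l)"
  proof (rule bij_betw_byWitness[where f' = ?psi])
    show "\<forall>a\<in>Sset (c # b) l. ?psi (?phi a) = a"
      by (auto simp: fun_eq_iff)
    show "\<forall>a'\<in>wcomp c l \<times> Sset b l. ?phi (?psi a') = a'"
      by (auto simp: fun_eq_iff)
    show "?phi ` Sset (c # b) l \<subseteq> wcomp c l \<times> Sset b l"
    proof
      fix x assume "x \<in> ?phi ` Sset (c # b) l"
      then obtain e where e: "e \<in> Sset (c # b) l" and x: "x = ?phi e" by blast
      have "(\<lambda>j. e (0, j)) \<in> wcomp c l"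
        unfolding wcomp_def mem_Collect_eq using SsetD(1)[OF e, of 0] SsetD(2)[OF e, of 0] by auto
      moreover have "(\<lambda>p. e (Suc (fst p), snd p)) \<in> Sset b l"
      proof (rule SsetI)
        fix i j assume "(\<lambda>p. e (Suc (fst p), snd p)) (i, j) \<noteq> 0"
        then have "e (Suc i, j) \<noteq> 0" by simp
        from SsetD(1)[OF e this] show "i < length b \<and> j \<le> b ! i" by simp
      next
        fix i assume "i < length b"
        then show "(\<Sum>j\<le>b ! i. (\<lambda>p. e (Suc (fst p), snd p)) (i, j)) = l"
          using SsetD(2)[OF e, of "Suc i"] by simp
      qed
      ultimately show "x \<in> wcomp c l \<times> Sset b l" using x by simp
    qed
    show "?psi ` (wcomp c l \<times> Sset b l) \<subseteq> Sset (c # b) l"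
    proof
      fix x assume "x \<in> ?psi ` (wcomp c l \<times> Sset b l)"
      then obtain f e' where f: "f \<in> wcomp c l" and e': "e' \<in> Sset b l" and x: "x = ?psi (f, e')" by blast
      have f1: "\<And>j. f j \<noteq> 0 \<Longrightarrow> j \<le> c" and f2: "(\<Sum>j\<le>c. f j) = l"
        using f unfolding wcomp_def by auto
      show "x \<in> Sset (c # b) l"
      proof (rule SsetI)
        fix i j assume "x (i, j) \<noteq> 0"
        then show "i < length (c # b) \<and> j \<le> (c # b) ! i"
          using f1 SsetD(1)[OF e', of "i - 1" j] unfolding x by (cases i) auto
      next
        fix i assume "i < length (c # b)"
        then show "(\<Sum>j\<le>(c # b) ! i. x (i, j)) = l"
          using f2 SsetD(2)[OF e', of "i - 1"] unfolding x by (cases i) auto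
      qed
    qed
  qed
  then show ?thesis by (simp add: bij_betw_same_card card_cartesian_product)
qed

lemma hilbert_formula: "hilbert_fun b l = (\<Prod>c\<leftarrow>b. (l + c) choose c)"
proof -
  have "card (Sset b l) = (\<Prod>c\<leftarrow>b. (l + c) choose c)"
    by (induction b) (simp_all add: Sset_Nil Sset_Cons card_wcomp)
  then show ?thesis by (simp add: hilbert_fun_def deg_eq)
qed


lemma hP: "of_nat (\<Prod>c\<leftarrow>b. (n + c) choose c) = P b (int n)"
  by (induction b) (simp_all add: P_def Q_def binomial_gbinomial)

lemma P_zero:
  assumes "B \<in> set b" "- int B \<le> x" "x < 0"
  shows "P b x = 0"
proof -
  define m where "m = nat (x + int B)"
  have m: "m < B" "x + int B = int m" using assms(2,3) by (auto simp: m_def)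
  have "of_int x + of_nat B = (of_nat m :: rat)"
    using m(2) by (metis of_int_add of_int_of_nat_eq)
  then have "Q B x = of_nat (m choose B)" by (simp add: Q_def binomial_gbinomial)
  also have "\<dots> = 0" using m(1) by simp
  finally have "0 \<in> set (map (\<lambda>c. Q c x) b)" using assms(1) by force
  then show ?thesis by (simp add: P_def prod_list_zero_iff)
qed

lemma Q_neg:
  assumes "c \<le> B"
  shows "Q c (- (int B + 1)) = (-1) ^ c * of_nat (B choose c)"
proof -
  have e1: "of_int (- (int B + 1)) + of_nat c = - (of_nat (B + 1 - c) :: rat)"
    using assms by (simp add: of_nat_diff)
  have e2: "(of_nat (B + 1 - c) :: rat) + of_nat c - 1 = of_nat B"
    using assms by (simp add: of_nat_diff)
  have "Q c (- (int B + 1)) = (- (of_nat (B + 1 - c) :: rat)) gchoose c"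
    unfolding Q_def e1 ..
  also have "\<dots> = (-1) ^ c * ((of_nat (B + 1 - c) + of_nat c - 1) gchoose c)"
    by (rule gbinomial_minus)
  also have "\<dots> = (-1) ^ c * of_nat (B choose c)"
    unfolding e2 by (simp add: binomial_gbinomial)
  finally show ?thesis .
qed

lemma P_neg:
  assumes "\<forall>c\<in>set b. c \<le> B"
  shows "P b (- (int B + 1)) = (-1) ^ (sum_list b) * of_nat (\<Prod>c\<leftarrow>b. B choose c)"
  using assms
proof (induction b)
  case Nil
  then show ?case by (simp add: P_def)
next
  case (Cons c b)
  have ih: "P b (- (int B + 1)) = (-1) ^ (sum_list b) * of_nat (\<Prod>c\<leftarrow>b. B choose c)"
    using Cons.IH Cons.prems by simp
  have q: "Q c (- (int B + 1)) = (-1) ^ c * of_nat (B choose c)"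
    using Cons.prems by (intro Q_neg) simp
  have "P (c # b) (- (int B + 1)) = Q c (- (int B + 1)) * P b (- (int B + 1))"
    by (simp add: P_def)
  also have "\<dots> = (-1) ^ c * of_nat (B choose c) * ((-1) ^ (sum_list b) * of_nat (\<Prod>c\<leftarrow>b. B choose c))"
    unfolding ih q ..
  also have "\<dots> = (-1) ^ (sum_list (c # b)) * of_nat (\<Prod>c\<leftarrow>c # b. B choose c)"
    by (simp add: power_add algebra_simps)
  finally show ?case .
qed

lemma prod_int: "(\<Prod>x\<leftarrow>b. int (f x)) = int (\<Prod>x\<leftarrow>b. f x)"
  by (induction b) auto

lemma prod_nat_eq_1: "(\<Prod>x\<leftarrow>b. (f x :: nat)) = 1 \<longleftrightarrow> (\<forall>x\<in>set b. f x = 1)"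
  by (induction b) auto

lemma choose_eq_1:
  assumes "x \<le> B" "0 < x"
  shows "B choose x = 1 \<longleftrightarrow> x = B"
proof
  assume h: "B choose x = 1"
  show "x = B"
  proof (rule ccontr)
    assume "x \<noteq> B"
    then have "x < B" using assms by simp
    then obtain n k where n: "B = Suc n" and k: "x = Suc k" and kn: "k < n"
      using assms(2) by (metis Suc_less_eq gr0_implies_Suc less_imp_Suc_add)
    have "B choose x = (n choose k) + (n choose (Suc k))" by (simp add: n k)
    moreover have "0 < n choose k" "0 < n choose (Suc k)" using kn by simp_all
    ultimately show False using h by simp
  qed
qed simp

lemma main_comp:
  fixes b :: "nat list"
  assumes "b \<noteq> []"
  defines "B \<equiv> Max (set b)"
  shows "h_vec b (sum_list b - B) = (\<Prod>x\<leftarrow>b. int (B choose x))"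
    and "\<forall>k > sum_list b - B. h_vec b k = 0"
proof -
  have Bin: "B \<in> set b" using assms by (simp add: B_def)
  have Ble: "\<forall>c\<in>set b. c \<le> B" by (simp add: B_def)
  have BD: "B \<le> sum_list b" using Bin by (auto intro: member_le_sum_list)
  define d where "d = krull_dim b"
  have d: "d = sum_list b + 1" by (simp add: d_def krull_dim_def)
  define A :: "int fps" where "A = Abs_fps (\<lambda>l. of_nat (hilbert_fun b l))"
  define aR where "aR = (\<lambda>x::int. if 0 \<le> x then P b x else 0)"
  define g where "g = (\<lambda>x::int. if 0 \<le> x then 0 else P b x)"
  have hv: "of_int (h_vec b k) = - (Dop ^^ d) g (int k)" for k
  proof -
    have "h_vec b k = (Dop ^^ d) (\<lambda>x. if x \<ge> 0 then A $ nat x else 0) (int k)"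
      unfolding h_vec_def A_def[symmetric] d_def by (rule fps_coeff)
    then have "(of_int (h_vec b k) :: rat) = (Dop ^^ d) (\<lambda>x. of_int (if x \<ge> 0 then A $ nat x else 0)) (int k)"
      by (simp add: Dpow_of_int)
    also have "(\<lambda>x. of_int (if x \<ge> 0 then A $ nat x else 0)) = (\<lambda>x. P b x - g x)"
    proof
      fix x :: int
      show "of_int (if x \<ge> 0 then A $ nat x else 0) = P b x - g x"
      proof (cases "x \<ge> 0")
        case True
        then have "P b x = P b (int (nat x))" by simp
        also have "\<dots> = of_nat (hilbert_fun b (nat x))" by (simp add: hilbert_formula hP)
        finally show ?thesis using True by (simp add: A_def g_def)
      qed (simp add: g_def)
    qed
    also have "(Dop ^^ d) (\<lambda>x. P b x - g x) (int k) = - (Dop ^^ d) g (int k)"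
      unfolding Dpow_diff d using P_kill[of b] by simp
    finally show ?thesis .
  qed
  define y where "y = - (int B + 1)"
  have gz: "\<forall>x>y. g x = 0"
  proof (intro allI impI)
    fix x assume "x > y"
    then show "g x = 0" using P_zero[OF Bin, of x] by (auto simp: g_def y_def)
  qed
  have yd: "y + int d = int (sum_list b - B)" using BD by (simp add: y_def d)
  note w = window[OF gz, of d, unfolded yd]
  have gy: "g y = (-1) ^ (sum_list b) * of_nat (\<Prod>c\<leftarrow>b. B choose c)"
    using P_neg[OF Ble] by (simp add: g_def y_def)
  have "(of_int (h_vec b (sum_list b - B)) :: rat) = of_nat (\<Prod>c\<leftarrow>b. B choose c)"
    using hv w gy by (simp add: d power_add)
  then have "h_vec b (sum_list b - B) = int (\<Prod>c\<leftarrow>b. B choose c)"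
    by (metis of_int_eq_iff of_int_of_nat_eq)
  then show "h_vec b (sum_list b - B) = (\<Prod>x\<leftarrow>b. int (B choose x))"
    by (simp add: prod_int)
  show "\<forall>k > sum_list b - B. h_vec b k = 0"
  proof (intro allI impI)
    fix k assume "k > sum_list b - B"
    then have "(of_int (h_vec b k) :: rat) = 0" using hv w by simp
    then show "h_vec b k = 0" by simp
  qed
qed

theorem mainTheorem5:
  fixes b :: "nat list"
  assumes "b \<noteq> []" and "\<forall>x\<in>set b. 0 < x"
  shows "h_vec b (sum_list b - Max (set b)) \<noteq> 0
       \<and> (\<forall>k > sum_list b - Max (set b). h_vec b k = 0)
       \<and> h_vec b (sum_list b - Max (set b)) = (\<Prod>x\<leftarrow>b. int (Max (set b) choose x))
       \<and> (h_vec b (sum_list b - Max (set b)) = 1 \<longleftrightarrow> (\<forall>x\<in>set b. x = hd b))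
       \<and> ((\<forall>x\<in>set b. x = hd b) \<longrightarrow> sum_list b - Max (set b) = (length b - 1) * hd b)"
proof -
  define B where "B = Max (set b)"
  have Bin: "B \<in> set b" using assms by (simp add: B_def)
  have Ble: "\<forall>c\<in>set b. c \<le> B" by (simp add: B_def)
  have hd_in: "hd b \<in> set b" using assms(1) by simp
  note mc = main_comp[OF assms(1), folded B_def]
  have prod_eq: "(\<Prod>x\<leftarrow>b. int (B choose x)) = int (\<Prod>x\<leftarrow>b. B choose x)" by (rule prod_int)
  have nz: "(\<Prod>x\<leftarrow>b. B choose x) \<noteq> 0"
    using Ble by (auto simp: prod_list_zero_iff)
  have one: "(\<Prod>x\<leftarrow>b. B choose x) = 1 \<longleftrightarrow> (\<forall>x\<in>set b. x = hd b)"
  proof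
    assume "(\<Prod>x\<leftarrow>b. B choose x) = 1"
    then have "\<forall>x\<in>set b. B choose x = 1" using prod_nat_eq_1[of "\<lambda>x. B choose x" b] by simp
    then have "\<forall>x\<in>set b. x = B" using Ble assms(2) choose_eq_1 by blast
    then show "\<forall>x\<in>set b. x = hd b" using hd_in by metis
  next
    assume all: "\<forall>x\<in>set b. x = hd b"
    then have "B = hd b" using Bin by blast
    then show "(\<Prod>x\<leftarrow>b. B choose x) = 1" using all prod_nat_eq_1[of "\<lambda>x. B choose x" b] by simp
  qed
  have last: "sum_list b - B = (length b - 1) * hd b" if all: "\<forall>x\<in>set b. x = hd b"
  proof -
    have "B = hd b" using Bin all by blast
    moreover have "b = replicate (length b) (hd b)" using all by (simp add: replicate_length_same)
    then have "sum_list b = sum_list (replicate (length b) (hd b))" by metis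
    then have "sum_list b = length b * hd b" by (simp add: sum_list_replicate)
    ultimately show ?thesis by (simp add: diff_mult_distrib)
  qed
  show ?thesis
    unfolding B_def[symmetric] using mc prod_eq nz one last by simp
qed

end
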